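(* Let $D\subseteq\mathbb{R}^3\setminus\{0\}$ be open and $\vec\mu:D\to\mathbb{R}^3$ smooth (depending only on $\vec\gamma$), regarded as a function on $\mathbb{R}^3\times D$. Then $\Pi_{\vec\mu}$ defines a Poisson bracket if and only if $\vec\gamma\cdot\operatorname{curl}_{\vec\gamma}\vec\mu=0$ on $D$, which is equivalent to $\operatorname{div}_{\vec\gamma}(\vec\gamma\times\vec\mu(\vec\gamma))=0$ on $D$.
   Context: Coordinates on $\mathbb{R}^6$ are $(\vec M,\vec\gamma)=(M_1,M_2,M_3,\gamma_1,\gamma_2,\gamma_3)$. For a smooth $\vec\mu=(\mu_1,\mu_2,\mu_3)$ of $(\vec M,\vec\gamma)$, $\Pi_{\vec\mu}$ is the skew-symmetric $6\times6$ matrix $$\Pi_{\vec\mu}=\begin{bmatrix}0&-M_3-\mu_3&M_2+\mu_2&0&-\gamma_3&\gamma_2\\ M_3+\mu_3&0&-M_1-\mu_1&\gamma_3&0&-\gamma_1\\ -M_2-\mu_2&M_1+\mu_1&0&-\gamma_2&\gamma_1&0\\ 0&-\gamma_3&\gamma_2&0&0&0\\ \gamma_3&0&-\gamma_1&0&0&0\\ -\gamma_2&\gamma_1&0&0&0&0\end{bmatrix},$$ and it "defines a Poisson bracket" if $\{f,g\}_{\vec\mu}=(\nabla f)^T\Pi_{\vec\mu}\nabla g$ satisfies the Jacobi identity. *)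

theory Defs
  imports "HOL-Analysis.Analysis" "HOL-Analysis.Cross3"
begin

definition partial :: "'n::finite \<Rightarrow> (real^'n \<Rightarrow> real) \<Rightarrow> real^'n \<Rightarrow> real" where
  "partial i f x = deriv (\<lambda>t. f (x + t *\<^sub>R axis i 1)) 0"

fun iter_partial :: "'n::finite list \<Rightarrow> (real^'n \<Rightarrow> real) \<Rightarrow> real^'n \<Rightarrow> real" where
  "iter_partial [] f = f"
| "iter_partial (i # is) f = partial i (iter_partial is f)"

definition smooth_on :: "(real^'n::finite) set \<Rightarrow> (real^'n \<Rightarrow> real) \<Rightarrow> bool" where
  "smooth_on U f \<longleftrightarrow>
     (\<forall>is. continuous_on U (iter_partial is f) \<and>
        (\<forall>i. \<forall>x\<in>U. (\<lambda>t. iter_partial is f (x + t *\<^sub>R axis i 1)) differentiable (at 0)))"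

definition grad :: "(real^'n::finite \<Rightarrow> real) \<Rightarrow> real^'n \<Rightarrow> real^'n" where
  "grad f x = (\<chi> i. partial i f x)"

text \<open>Coordinates on R^6: x = (M1,M2,M3,gamma1,gamma2,gamma3) = (x$1,...,x$6).\<close>
definition Mv :: "real^6 \<Rightarrow> real^3" where
  "Mv x = vector [x$1, x$2, x$3]"

definition gv :: "real^6 \<Rightarrow> real^3" where
  "gv x = vector [x$4, x$5, x$6]"

definition Pi_mu :: "(real^3 \<Rightarrow> real^3) \<Rightarrow> real^6 \<Rightarrow> real^6^6" where
  "Pi_mu mu x =
    (let M1 = x$1; M2 = x$2; M3 = x$3; g1 = x$4; g2 = x$5; g3 = x$6;
         m = mu (gv x); m1 = m$1; m2 = m$2; m3 = m$3 in
     vector [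
      vector [0, -M3-m3, M2+m2, 0, -g3, g2],
      vector [M3+m3, 0, -M1-m1, g3, 0, -g1],
      vector [-M2-m2, M1+m1, 0, -g2, g1, 0],
      vector [0, -g3, g2, 0, 0, 0],
      vector [g3, 0, -g1, 0, 0, 0],
      vector [-g2, g1, 0, 0, 0, 0]])"

definition pbracket :: "(real^3 \<Rightarrow> real^3) \<Rightarrow> (real^6 \<Rightarrow> real) \<Rightarrow> (real^6 \<Rightarrow> real) \<Rightarrow> real^6 \<Rightarrow> real" where
  "pbracket mu f g x = grad f x \<bullet> (Pi_mu mu x *v grad g x)"

definition defines_poisson :: "(real^3 \<Rightarrow> real^3) \<Rightarrow> (real^3) set \<Rightarrow> bool" where
  "defines_poisson mu D \<longleftrightarrow>
     (\<forall>f g h. smooth_on {x. gv x \<in> D} f \<and> smooth_on {x. gv x \<in> D} g \<and> smooth_on {x. gv x \<in> D} h \<longrightarrow>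
        (\<forall>x. gv x \<in> D \<longrightarrow>
           pbracket mu f (pbracket mu g h) x + pbracket mu g (pbracket mu h f) x
           + pbracket mu h (pbracket mu f g) x = 0))"

definition curl3 :: "(real^3 \<Rightarrow> real^3) \<Rightarrow> real^3 \<Rightarrow> real^3" where
  "curl3 F y = vector [
     partial 2 (\<lambda>z. F z $ 3) y - partial 3 (\<lambda>z. F z $ 2) y,
     partial 3 (\<lambda>z. F z $ 1) y - partial 1 (\<lambda>z. F z $ 3) y,
     partial 1 (\<lambda>z. F z $ 2) y - partial 2 (\<lambda>z. F z $ 1) y]"

definition div3 :: "(real^3 \<Rightarrow> real^3) \<Rightarrow> real^3 \<Rightarrow> real" where
  "div3 F y = (\<Sum>i\<in>UNIV. partial i (\<lambda>z. F z $ i) y)"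

end

theory Submission
  imports Defs
begin


lemma HD_differentiable: "(f has_real_derivative D) (at x) \<Longrightarrow> f differentiable (at x)"
  using real_differentiable_def by blast

lemma partial_eqI:
  "((\<lambda>t. f (x + t *\<^sub>R axis i 1)) has_real_derivative D) (at 0) \<Longrightarrow> partial i f x = D"
  by (simp add: partial_def DERIV_imp_deriv)

lemma partial_HD:
  "(\<lambda>t. f (x + t *\<^sub>R axis i 1)) differentiable (at 0) \<Longrightarrow>
   ((\<lambda>t. f (x + t *\<^sub>R axis i 1)) has_real_derivative partial i f x) (at 0)"
  by (simp add: partial_def DERIV_deriv_iff_real_differentiable)

lemma line_deriv:
  fixes f :: "real^'n \<Rightarrow> real"
  assumes "(\<lambda>t. f (z + s0 *\<^sub>R axis i 1 + t *\<^sub>R axis i 1)) differentiable (at 0)"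
  shows "((\<lambda>s. f (z + s *\<^sub>R axis i 1)) has_real_derivative partial i f (z + s0 *\<^sub>R axis i 1)) (at s0)"
proof -
  have 1: "((\<lambda>t. f (z + s0 *\<^sub>R axis i 1 + t *\<^sub>R axis i 1)) has_real_derivative partial i f (z + s0 *\<^sub>R axis i 1)) (at 0)"
    using partial_HD[OF assms] .
  have eq: "(\<lambda>t. f (z + (t + s0) *\<^sub>R axis i 1)) = (\<lambda>t. f (z + s0 *\<^sub>R axis i 1 + t *\<^sub>R axis i 1))"
    by (simp add: algebra_simps)
  have "((\<lambda>t. f (z + (t + s0) *\<^sub>R axis i 1)) has_real_derivative partial i f (z + s0 *\<^sub>R axis i 1)) (at 0)"
    using 1 eq by simp
  thus ?thesis using DERIV_shift[of "\<lambda>s. f (z + s *\<^sub>R axis i 1)" _ 0 s0] by simp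
qed

lemma mixed_mvt:
  fixes f :: "real^'n \<Rightarrow> real"
  assumes h: "0 < h"
  and U: "\<forall>s\<in>{0..h}. \<forall>t\<in>{0..h}. x + s *\<^sub>R axis i 1 + t *\<^sub>R axis j 1 \<in> U"
  and di: "\<forall>y\<in>U. (\<lambda>t. f (y + t *\<^sub>R axis i 1)) differentiable (at 0)"
  and dji: "\<forall>y\<in>U. (\<lambda>t. partial i f (y + t *\<^sub>R axis j 1)) differentiable (at 0)"
  shows "\<exists>s t. 0<s \<and> s<h \<and> 0<t \<and> t<h \<and>
     f (x + h *\<^sub>R axis i 1 + h *\<^sub>R axis j 1) - f (x + h *\<^sub>R axis i 1) - f (x + h *\<^sub>R axis j 1) + f x
     = h * h * partial j (partial i f) (x + s *\<^sub>R axis i 1 + t *\<^sub>R axis j 1)"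
proof -
  define ei :: "real^'n" where "ei = axis i 1"
  define ej :: "real^'n" where "ej = axis j 1"
  define g where "g s = f (x + h *\<^sub>R ej + s *\<^sub>R ei) - f (x + s *\<^sub>R ei)" for s
  have gd: "(g has_real_derivative (partial i f (x + s *\<^sub>R ei + h *\<^sub>R ej) - partial i f (x + s *\<^sub>R ei))) (at s)"
    if s: "s \<in> {0..h}" for s
  proof -
    have p1: "x + h *\<^sub>R ej + s *\<^sub>R ei \<in> U" using U s h unfolding ei_def ej_def
      by (metis add.assoc add.commute atLeastAtMost_iff less_eq_real_def)
    have p2: "x + s *\<^sub>R ei \<in> U" using U s h unfolding ei_def ej_def
      by (metis add.right_neutral atLeastAtMost_iff less_eq_real_def order_refl scale_zero_left)
    have d1: "((\<lambda>s. f (x + h *\<^sub>R ej + s *\<^sub>R ei)) has_real_derivative partial i f (x + h *\<^sub>R ej + s *\<^sub>R ei)) (at s)"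
      using line_deriv[of f "x + h *\<^sub>R ej" s i] di p1 unfolding ei_def by simp
    have d2: "((\<lambda>s. f (x + s *\<^sub>R ei)) has_real_derivative partial i f (x + s *\<^sub>R ei)) (at s)"
      using line_deriv[of f x s i] di p2 unfolding ei_def by simp
    show ?thesis using DERIV_diff[OF d1 d2] unfolding g_def[abs_def]
      by (simp add: add_ac)
  qed
  have "continuous_on {0..h} g"
    using gd by (meson DERIV_isCont continuous_at_imp_continuous_on)
  moreover have "\<And>s. 0 < s \<Longrightarrow> s < h \<Longrightarrow> g differentiable (at s)"
    using gd HD_differentiable by (meson atLeastAtMost_iff less_eq_real_def)
  ultimately obtain l \<xi> where \<xi>: "0 < \<xi>" "\<xi> < h" and dl: "DERIV g \<xi> :> l" and gl: "g h - g 0 = (h - 0) * l"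
    using MVT[OF h] by blast
  have l: "l = partial i f (x + \<xi> *\<^sub>R ei + h *\<^sub>R ej) - partial i f (x + \<xi> *\<^sub>R ei)"
    using DERIV_unique[OF dl gd[of \<xi>]] \<xi> by simp
  define k where "k t = partial i f (x + \<xi> *\<^sub>R ei + t *\<^sub>R ej)" for t
  have kd: "(k has_real_derivative partial j (partial i f) (x + \<xi> *\<^sub>R ei + t *\<^sub>R ej)) (at t)"
    if t: "t \<in> {0..h}" for t
  proof -
    have p: "x + \<xi> *\<^sub>R ei + t *\<^sub>R ej \<in> U" using U t \<xi> unfolding ei_def ej_def by auto
    show ?thesis unfolding k_def[abs_def]
      using line_deriv[of "partial i f" "x + \<xi> *\<^sub>R ei" t j] dji p unfolding ej_def by simp
  qed
  have "continuous_on {0..h} k"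
    using kd by (meson DERIV_isCont continuous_at_imp_continuous_on)
  moreover have "\<And>s. 0 < s \<Longrightarrow> s < h \<Longrightarrow> k differentiable (at s)"
    using kd HD_differentiable by (meson atLeastAtMost_iff less_eq_real_def)
  ultimately obtain l2 \<eta> where \<eta>: "0 < \<eta>" "\<eta> < h" and dl2: "DERIV k \<eta> :> l2" and kl: "k h - k 0 = (h - 0) * l2"
    using MVT[OF h] by blast
  have l2: "l2 = partial j (partial i f) (x + \<xi> *\<^sub>R ei + \<eta> *\<^sub>R ej)"
    using DERIV_unique[OF dl2 kd[of \<eta>]] \<eta> by simp
  have "f (x + h *\<^sub>R ei + h *\<^sub>R ej) - f (x + h *\<^sub>R ei) - f (x + h *\<^sub>R ej) + f x = g h - g 0"
    unfolding g_def by (simp add: add_ac)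
  also have "\<dots> = h * (k h - k 0)" using gl l unfolding k_def by simp
  also have "\<dots> = h * h * l2" using kl by simp
  finally show ?thesis using \<xi> \<eta> l2 unfolding ei_def ej_def by blast
qed

lemma abs_contra: "\<bar>u - a\<bar> < \<bar>a - b\<bar> / 2 \<Longrightarrow> \<bar>v - b\<bar> < \<bar>a - b\<bar> / 2 \<Longrightarrow> u = (v::real) \<Longrightarrow> False"
  by (simp add: abs_if split: if_splits)

lemma schwarz:
  fixes f :: "real^'n \<Rightarrow> real"
  assumes U: "open U" "x \<in> U"
  and di: "\<forall>y\<in>U. (\<lambda>t. f (y + t *\<^sub>R axis i 1)) differentiable (at 0)"
  and dj: "\<forall>y\<in>U. (\<lambda>t. f (y + t *\<^sub>R axis j 1)) differentiable (at 0)"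
  and dji: "\<forall>y\<in>U. (\<lambda>t. partial i f (y + t *\<^sub>R axis j 1)) differentiable (at 0)"
  and dij: "\<forall>y\<in>U. (\<lambda>t. partial j f (y + t *\<^sub>R axis i 1)) differentiable (at 0)"
  and cji: "continuous_on U (partial j (partial i f))"
  and cij: "continuous_on U (partial i (partial j f))"
  shows "partial j (partial i f) x = partial i (partial j f) x"
proof (rule ccontr)
  define a where "a = partial j (partial i f) x"
  define b where "b = partial i (partial j f) x"
  assume "\<not> ?thesis"
  hence ab: "a \<noteq> b" unfolding a_def b_def .
  define e where "e = \<bar>a - b\<bar> / 2"
  have e: "e > 0" using ab unfolding e_def by simp
  obtain r0 where r0: "r0 > 0" "ball x r0 \<subseteq> U" using U openE by blast
  have "isCont (partial j (partial i f)) x" using cji U continuous_on_eq_continuous_at by blast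
  then obtain r1 where r1: "r1 > 0" "\<forall>y. dist y x < r1 \<longrightarrow> dist (partial j (partial i f) y) a < e"
    using e unfolding continuous_at_eps_delta a_def by blast
  have "isCont (partial i (partial j f)) x" using cij U continuous_on_eq_continuous_at by blast
  then obtain r2 where r2: "r2 > 0" "\<forall>y. dist y x < r2 \<longrightarrow> dist (partial i (partial j f) y) b < e"
    using e unfolding continuous_at_eps_delta b_def by blast
  define r where "r = min r0 (min r1 r2)"
  define h where "h = r / 3"
  have r: "r > 0" using r0 r1 r2 unfolding r_def by simp
  have h: "h > 0" using r unfolding h_def by simp
  have close: "dist (x + s *\<^sub>R axis i 1 + t *\<^sub>R axis j 1) x < r" "dist (x + t *\<^sub>R axis j 1 + s *\<^sub>R axis i 1) x < r"
    if "s \<in> {0..h}" "t \<in> {0..h}" for s t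
  proof -
    have "norm (s *\<^sub>R (axis i 1::real^'n) + t *\<^sub>R axis j 1) \<le> norm (s *\<^sub>R (axis i 1::real^'n)) + norm (t *\<^sub>R (axis j 1::real^'n))"
      by (rule norm_triangle_ineq)
    also have "\<dots> = \<bar>s\<bar> + \<bar>t\<bar>" by (simp add: norm_axis_1)
    also have "\<dots> < r" using that r unfolding h_def by auto
    finally have "norm (s *\<^sub>R (axis i 1::real^'n) + t *\<^sub>R axis j 1) < r" .
    thus "dist (x + s *\<^sub>R axis i 1 + t *\<^sub>R axis j 1) x < r" "dist (x + t *\<^sub>R axis j 1 + s *\<^sub>R axis i 1) x < r"
      by (simp_all add: dist_norm add_ac)
  qed
  have inU: "x + s *\<^sub>R axis i 1 + t *\<^sub>R axis j 1 \<in> U" "x + t *\<^sub>R axis j 1 + s *\<^sub>R axis i 1 \<in> U"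
    if "s \<in> {0..h}" "t \<in> {0..h}" for s t
    using close[OF that] r0 unfolding r_def by (auto simp: dist_commute)
  obtain s t where st: "0<s" "s<h" "0<t" "t<h" and E1:
     "f (x + h *\<^sub>R axis i 1 + h *\<^sub>R axis j 1) - f (x + h *\<^sub>R axis i 1) - f (x + h *\<^sub>R axis j 1) + f x
     = h * h * partial j (partial i f) (x + s *\<^sub>R axis i 1 + t *\<^sub>R axis j 1)"
    using mixed_mvt[OF h _ di dji] inU by blast
  obtain s' t' where st': "0<s'" "s'<h" "0<t'" "t'<h" and E2:
     "f (x + h *\<^sub>R axis j 1 + h *\<^sub>R axis i 1) - f (x + h *\<^sub>R axis j 1) - f (x + h *\<^sub>R axis i 1) + f x
     = h * h * partial i (partial j f) (x + s' *\<^sub>R axis j 1 + t' *\<^sub>R axis i 1)"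
    using mixed_mvt[OF h _ dj dij, of x] inU by blast
  have "h * h * partial j (partial i f) (x + s *\<^sub>R axis i 1 + t *\<^sub>R axis j 1) = h * h * partial i (partial j f) (x + s' *\<^sub>R axis j 1 + t' *\<^sub>R axis i 1)"
  proof -
    have L: "f (x + h *\<^sub>R axis i 1 + h *\<^sub>R axis j 1) - f (x + h *\<^sub>R axis i 1) - f (x + h *\<^sub>R axis j 1) + f x
      = f (x + h *\<^sub>R axis j 1 + h *\<^sub>R axis i 1) - f (x + h *\<^sub>R axis j 1) - f (x + h *\<^sub>R axis i 1) + f x"
      by (simp add: add_ac)
    show ?thesis using E1 E2 L by linarith
  qed
  hence eq: "partial j (partial i f) (x + s *\<^sub>R axis i 1 + t *\<^sub>R axis j 1) = partial i (partial j f) (x + s' *\<^sub>R axis j 1 + t' *\<^sub>R axis i 1)"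
    using h by simp
  have "dist (partial j (partial i f) (x + s *\<^sub>R axis i 1 + t *\<^sub>R axis j 1)) a < e"
    using r1 close(1)[of s t] st unfolding r_def by auto
  moreover have "dist (partial i (partial j f) (x + s' *\<^sub>R axis j 1 + t' *\<^sub>R axis i 1)) b < e"
    using r2 close(2)[of t' s'] st' unfolding r_def by auto
  ultimately show False using eq abs_contra unfolding e_def dist_real_def by metis
qed



lemma exhaust_6:
  fixes x :: 6
  shows "x = 1 \<or> x = 2 \<or> x = 3 \<or> x = 4 \<or> x = 5 \<or> x = 6"
proof (induct x)
  case (of_int z)
  then have "z = 0 \<or> z = 1 \<or> z = 2 \<or> z = 3 \<or> z = 4 \<or> z = 5" by fastforce
  then show ?case by auto
qed

lemma UNIV_6: "UNIV = {1, 2, 3, 4, 5, 6::6}"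
  using exhaust_6 by auto

lemma sum_6: "sum f (UNIV::6 set) = f 1 + f 2 + f 3 + f 4 + f 5 + f 6"
  unfolding UNIV_6 by (simp add: ac_simps)

lemma vector_6 [simp]:
 "(vector [a,b,c,d,e,f] ::('a::zero)^6)$1 = a"
 "(vector [a,b,c,d,e,f] ::('a::zero)^6)$2 = b"
 "(vector [a,b,c,d,e,f] ::('a::zero)^6)$3 = c"
 "(vector [a,b,c,d,e,f] ::('a::zero)^6)$4 = d"
 "(vector [a,b,c,d,e,f] ::('a::zero)^6)$5 = e"
 "(vector [a,b,c,d,e,f] ::('a::zero)^6)$6 = f"
  unfolding vector_def by simp_all

definition Lm :: "real^6 \<Rightarrow> real^6^6" where
  "Lm w = vector [
      vector [0, -w$3, w$2, 0, -w$6, w$5],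
      vector [w$3, 0, -w$1, w$6, 0, -w$4],
      vector [-w$2, w$1, 0, -w$5, w$4, 0],
      vector [0, -w$6, w$5, 0, 0, 0],
      vector [w$6, 0, -w$4, 0, 0, 0],
      vector [-w$5, w$4, 0, 0, 0, 0]]"

definition Sx :: "('n::finite\<Rightarrow>'n\<Rightarrow>real) \<Rightarrow> ('n\<Rightarrow>'n\<Rightarrow>'n\<Rightarrow>real) \<Rightarrow> 'n \<Rightarrow> 'n \<Rightarrow> 'n \<Rightarrow> real" where
  "Sx P dP c a b = (\<Sum>l\<in>UNIV. P c l * dP l a b + P a l * dP l b c + P b l * dP l c a)"

definition ee :: "(3\<Rightarrow>3\<Rightarrow>real) \<Rightarrow> 6 \<Rightarrow> 3 \<Rightarrow> real" where
  "ee q l k = (if l = 4 then q 1 k else if l = 5 then q 2 k else if l = 6 then q 3 k else 0)"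

definition ddP :: "(3\<Rightarrow>3\<Rightarrow>real) \<Rightarrow> 6 \<Rightarrow> 6 \<Rightarrow> 6 \<Rightarrow> real" where
  "ddP q l a b = Lm (axis l 1 + vector [ee q l 1, ee q l 2, ee q l 3, 0, 0, 0]) $ a $ b"

lemma S123: "Sx (\<lambda>c l. Lm w $ c $ l) (ddP q) 1 2 3 = 
   - 1 * (w$4*(q 2 3 - q 3 2) + w$5*(q 3 1 - q 1 3) + w$6*(q 1 2 - q 2 1))"
  by (simp add: Sx_def sum_6 ddP_def Lm_def axis_def ee_def algebra_simps)

lemma S_zero:
  assumes K: "w$4*(q 2 3 - q 3 2) + w$5*(q 3 1 - q 1 3) + w$6*(q 1 2 - q 2 1) = 0"
  shows "Sx (\<lambda>c l. Lm w $ c $ l) (ddP q) c a b = 0"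
proof -
  have K': "w$4*q 2 3 + w$5*q 3 1 + w$6*q 1 2 = w$4*q 3 2 + w$5*q 1 3 + w$6*q 2 1"
    using K by (simp add: algebra_simps)
  show ?thesis using exhaust_6[of c] exhaust_6[of a] exhaust_6[of b]
    apply (elim disjE)
    apply (simp_all add: Sx_def sum_6 ddP_def Lm_def axis_def ee_def algebra_simps)
    using K' by (simp_all add: algebra_simps)
qed



lemma sum3_rot:
  fixes F :: "'a \<Rightarrow> 'b \<Rightarrow> 'c \<Rightarrow> real"
  shows "(\<Sum>c\<in>A. \<Sum>a\<in>B. \<Sum>b\<in>C. F c a b) = (\<Sum>a\<in>B. \<Sum>b\<in>C. \<Sum>c\<in>A. F c a b)"
proof -
  have "(\<Sum>c\<in>A. \<Sum>a\<in>B. \<Sum>b\<in>C. F c a b) = (\<Sum>a\<in>B. \<Sum>c\<in>A. \<Sum>b\<in>C. F c a b)"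
    by (rule sum.swap)
  also have "\<dots> = (\<Sum>a\<in>B. \<Sum>b\<in>C. \<Sum>c\<in>A. F c a b)"
    by (rule sum.cong[OF refl], rule sum.swap)
  finally show ?thesis .
qed

definition br1 :: "('n::finite\<Rightarrow>'n\<Rightarrow>real) \<Rightarrow> ('n\<Rightarrow>'n\<Rightarrow>'n\<Rightarrow>real) \<Rightarrow> ('n \<Rightarrow> real) \<Rightarrow> ('n\<Rightarrow>'n\<Rightarrow>real)
   \<Rightarrow> ('n \<Rightarrow> real) \<Rightarrow> ('n\<Rightarrow>'n\<Rightarrow>real) \<Rightarrow> 'n \<Rightarrow> real" where
  "br1 P dP u Hu v Hv d = (\<Sum>a\<in>UNIV. \<Sum>b\<in>UNIV. Hu d a * P a b * v b + u a * dP d a b * v b + u a * P a b * Hv d b)"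

definition QQ :: "('n::finite\<Rightarrow>'n\<Rightarrow>real) \<Rightarrow> ('n \<Rightarrow> real) \<Rightarrow> ('n \<Rightarrow> real) \<Rightarrow> real" where
  "QQ H x y = (\<Sum>d\<in>UNIV. \<Sum>a\<in>UNIV. x d * H d a * y a)"

lemma QQ_sym: assumes "\<forall>a b. H a b = H b a" shows "QQ H x y = QQ H y x"
proof -
  have "QQ H x y = (\<Sum>a\<in>UNIV. \<Sum>d\<in>UNIV. x d * H d a * y a)" unfolding QQ_def by (rule sum.swap)
  also have "\<dots> = QQ H y x" unfolding QQ_def using assms by (simp add: mult_ac)
  finally show ?thesis .
qed

definition UU :: "('n::finite\<Rightarrow>'n\<Rightarrow>real) \<Rightarrow> ('n \<Rightarrow> real) \<Rightarrow> 'n \<Rightarrow> real" where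
  "UU P u d = (\<Sum>c\<in>UNIV. u c * P c d)"

definition XX :: "('n::finite\<Rightarrow>'n\<Rightarrow>real) \<Rightarrow> ('n\<Rightarrow>'n\<Rightarrow>'n\<Rightarrow>real) \<Rightarrow> 'n \<Rightarrow> 'n \<Rightarrow> 'n \<Rightarrow> real" where
  "XX P dP c a b = (\<Sum>d\<in>UNIV. P c d * dP d a b)"

definition TT :: "('n::finite\<Rightarrow>'n\<Rightarrow>real) \<Rightarrow> ('n\<Rightarrow>'n\<Rightarrow>'n\<Rightarrow>real) \<Rightarrow> ('n \<Rightarrow> real) \<Rightarrow> ('n \<Rightarrow> real) \<Rightarrow> ('n \<Rightarrow> real) \<Rightarrow> real" where
  "TT P dP u v w = (\<Sum>c\<in>UNIV. \<Sum>a\<in>UNIV. \<Sum>b\<in>UNIV. u c * v a * w b * XX P dP c a b)"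

lemma step1: "(\<Sum>c\<in>UNIV. \<Sum>d\<in>UNIV. u c * P c d * X d) = (\<Sum>d\<in>UNIV. UU P u d * X d)"
proof -
  have "(\<Sum>c\<in>UNIV. \<Sum>d\<in>UNIV. u c * P c d * X d) = (\<Sum>d\<in>UNIV. \<Sum>c\<in>UNIV. u c * P c d * X d)"
    by (rule sum.swap)
  thus ?thesis unfolding UU_def by (simp add: sum_distrib_right)
qed

lemma step2:
  assumes P: "\<forall>a b. P a b = - P b a"
  shows "br1 P dP u Hu v Hv d = - (\<Sum>a\<in>UNIV. Hu d a * UU P v a)
     + (\<Sum>a\<in>UNIV. \<Sum>b\<in>UNIV. u a * dP d a b * v b) + (\<Sum>b\<in>UNIV. UU P u b * Hv d b)"
proof -
  have 1: "(\<Sum>a\<in>UNIV. \<Sum>b\<in>UNIV. Hu d a * P a b * v b) = - (\<Sum>a\<in>UNIV. Hu d a * UU P v a)"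
  proof -
    have "(\<Sum>a\<in>UNIV. \<Sum>b\<in>UNIV. Hu d a * P a b * v b) = (\<Sum>a\<in>UNIV. Hu d a * (\<Sum>b\<in>UNIV. P a b * v b))"
      by (simp add: sum_distrib_left mult.assoc)
    also have "\<dots> = (\<Sum>a\<in>UNIV. Hu d a * (- UU P v a))"
    proof -
      have "(\<Sum>b\<in>UNIV. P a b * v b) = - UU P v a" for a
        unfolding UU_def sum_negf[symmetric]
        by (rule sum.cong[OF refl]) (metis P mult.commute mult_minus_right)
      thus ?thesis by simp
    qed
    finally show ?thesis by (simp add: sum_negf)
  qed
  have 3: "(\<Sum>a\<in>UNIV. \<Sum>b\<in>UNIV. u a * P a b * Hv d b) = (\<Sum>b\<in>UNIV. UU P u b * Hv d b)"
    using step1[of u P "Hv d"] .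
  show ?thesis unfolding br1_def sum.distrib 1 3 by simp
qed

lemma step3:
  "(\<Sum>d\<in>UNIV. UU P u d * (\<Sum>a\<in>UNIV. \<Sum>b\<in>UNIV. v a * dP d a b * w b)) = TT P dP u v w"
proof -
  have "(\<Sum>d\<in>UNIV. UU P u d * (\<Sum>a\<in>UNIV. \<Sum>b\<in>UNIV. v a * dP d a b * w b))
      = (\<Sum>d\<in>UNIV. \<Sum>a\<in>UNIV. \<Sum>b\<in>UNIV. \<Sum>c\<in>UNIV. u c * v a * w b * (P c d * dP d a b))"
    unfolding UU_def by (simp add: sum_distrib_left sum_distrib_right mult_ac)
  also have "\<dots> = (\<Sum>d\<in>UNIV. \<Sum>c\<in>UNIV. \<Sum>a\<in>UNIV. \<Sum>b\<in>UNIV. u c * v a * w b * (P c d * dP d a b))"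
    by (rule sum.cong[OF refl], rule sum3_rot[symmetric])
  also have "\<dots> = (\<Sum>c\<in>UNIV. \<Sum>d\<in>UNIV. \<Sum>a\<in>UNIV. \<Sum>b\<in>UNIV. u c * v a * w b * (P c d * dP d a b))"
    by (rule sum.swap)
  also have "\<dots> = (\<Sum>c\<in>UNIV. \<Sum>a\<in>UNIV. \<Sum>b\<in>UNIV. \<Sum>d\<in>UNIV. u c * v a * w b * (P c d * dP d a b))"
    by (rule sum.cong[OF refl], rule sum3_rot)
  also have "\<dots> = TT P dP u v w"
    unfolding TT_def XX_def by (simp add: sum_distrib_left)
  finally show ?thesis .
qed

lemma step4:
  "QQ H x (\<lambda>a. - y a) = - QQ H x y"
  unfolding QQ_def by (simp add: sum_negf[symmetric])

lemma jacobi_alg: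
  fixes P :: "'n::finite\<Rightarrow>'n\<Rightarrow>real"
  assumes P: "\<forall>a b. P a b = - P b a"
  and sf: "\<forall>a b. Hf a b = Hf b a" and sg: "\<forall>a b. Hg a b = Hg b a" and sh: "\<forall>a b. Hh a b = Hh b a"
  shows "(\<Sum>c\<in>UNIV. \<Sum>d\<in>UNIV. f c * P c d * br1 P dP g Hg h Hh d)
       + (\<Sum>c\<in>UNIV. \<Sum>d\<in>UNIV. g c * P c d * br1 P dP h Hh f Hf d)
       + (\<Sum>c\<in>UNIV. \<Sum>d\<in>UNIV. h c * P c d * br1 P dP f Hf g Hg d)
       = TT P dP f g h + TT P dP g h f + TT P dP h f g"
proof -
  have E: "(\<Sum>c\<in>UNIV. \<Sum>d\<in>UNIV. u c * P c d * br1 P dP v Hv w Hw d)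
     = - QQ Hv (UU P u) (UU P w) + TT P dP u v w + QQ Hw (UU P u) (UU P v)" for u v w Hv Hw
  proof -
    have "(\<Sum>c\<in>UNIV. \<Sum>d\<in>UNIV. u c * P c d * br1 P dP v Hv w Hw d) = (\<Sum>d\<in>UNIV. UU P u d * br1 P dP v Hv w Hw d)"
      by (rule step1)
    also have "\<dots> = (\<Sum>d\<in>UNIV. UU P u d * (- (\<Sum>a\<in>UNIV. Hv d a * UU P w a)))
       + (\<Sum>d\<in>UNIV. UU P u d * (\<Sum>a\<in>UNIV. \<Sum>b\<in>UNIV. v a * dP d a b * w b))
       + (\<Sum>d\<in>UNIV. UU P u d * (\<Sum>b\<in>UNIV. UU P v b * Hw d b))"
      unfolding step2[OF P] by (simp only: distrib_left sum.distrib)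
    also have "\<dots> = - QQ Hv (UU P u) (UU P w) + TT P dP u v w + QQ Hw (UU P u) (UU P v)"
      unfolding step3 QQ_def by (simp add: sum_distrib_left sum_negf mult_ac)
    finally show ?thesis .
  qed
  show ?thesis unfolding E using QQ_sym[OF sf] QQ_sym[OF sg] QQ_sym[OF sh] by simp
qed

lemma TT_Sx:
  "TT P dP f g h + TT P dP g h f + TT P dP h f g
   = (\<Sum>c\<in>UNIV. \<Sum>a\<in>UNIV. \<Sum>b\<in>UNIV. f c * g a * h b * Sx P dP c a b)"
proof -
  have A: "(\<Sum>c\<in>UNIV. \<Sum>a\<in>UNIV. \<Sum>b\<in>UNIV. f c * g a * h b * XX P dP a b c) = TT P dP g h f"
  proof -
    have "(\<Sum>c\<in>UNIV. \<Sum>a\<in>UNIV. \<Sum>b\<in>UNIV. f c * g a * h b * XX P dP a b c)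
       = (\<Sum>a\<in>UNIV. \<Sum>b\<in>UNIV. \<Sum>c\<in>UNIV. f c * g a * h b * XX P dP a b c)" by (rule sum3_rot)
    thus ?thesis unfolding TT_def by (simp add: mult_ac)
  qed
  have B: "(\<Sum>c\<in>UNIV. \<Sum>a\<in>UNIV. \<Sum>b\<in>UNIV. f c * g a * h b * XX P dP b c a) = TT P dP h f g"
  proof -
    have "TT P dP h f g = (\<Sum>c\<in>UNIV. \<Sum>a\<in>UNIV. \<Sum>b\<in>UNIV. h c * f a * g b * XX P dP c a b)"
      unfolding TT_def ..
    also have "\<dots> = (\<Sum>a\<in>UNIV. \<Sum>b\<in>UNIV. \<Sum>c\<in>UNIV. h c * f a * g b * XX P dP c a b)" by (rule sum3_rot)
    finally show ?thesis by (simp add: mult_ac)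
  qed
  have "(\<Sum>c\<in>UNIV. \<Sum>a\<in>UNIV. \<Sum>b\<in>UNIV. f c * g a * h b * Sx P dP c a b)
     = (\<Sum>c\<in>UNIV. \<Sum>a\<in>UNIV. \<Sum>b\<in>UNIV. f c * g a * h b * XX P dP c a b)
     + (\<Sum>c\<in>UNIV. \<Sum>a\<in>UNIV. \<Sum>b\<in>UNIV. f c * g a * h b * XX P dP a b c)
     + (\<Sum>c\<in>UNIV. \<Sum>a\<in>UNIV. \<Sum>b\<in>UNIV. f c * g a * h b * XX P dP b c a)"
    unfolding Sx_def XX_def by (simp add: sum.distrib distrib_left)
  thus ?thesis using A B unfolding TT_def by simp
qed



lemma Lm_antisym: "Lm w $ a $ b = - (Lm w $ b $ a)"
  using exhaust_6[of a] exhaust_6[of b]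
  by (elim disjE) (simp_all add: Lm_def)

lemma Lm_deriv:
  assumes "\<And>k. ((\<lambda>t. w t $ k) has_real_derivative w' $ k) (at 0)"
  shows "((\<lambda>t. Lm (w t) $ a $ b) has_real_derivative Lm w' $ a $ b) (at 0)"
proof -
  have d: "((\<lambda>t. - (w t $ k)) has_real_derivative - (w' $ k)) (at 0)" for k
    using DERIV_minus[OF assms] .
  show ?thesis
    using exhaust_6[of a] exhaust_6[of b]
    by (elim disjE) (simp_all add: Lm_def assms d)
qed

definition Wv :: "(real^3 \<Rightarrow> real^3) \<Rightarrow> real^6 \<Rightarrow> real^6" where
  "Wv mu x = vector [x$1 + mu (gv x) $ 1, x$2 + mu (gv x) $ 2, x$3 + mu (gv x) $ 3, x$4, x$5, x$6]"

lemma Pi_Lm: "Pi_mu mu x = Lm (Wv mu x)"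
  unfolding Pi_mu_def Lm_def Wv_def Let_def by simp

lemma gv_lin: "gv (x + t *\<^sub>R v) = gv x + t *\<^sub>R gv v"
  unfolding gv_def by (simp add: vec_eq_iff forall_3)

lemma gv_axis:
  "gv (axis 1 1) = 0" "gv (axis 2 1) = 0" "gv (axis 3 1) = 0"
  "gv (axis 4 1) = axis 1 1" "gv (axis 5 1) = axis 2 1" "gv (axis 6 1) = axis 3 1"
  unfolding gv_def by (simp_all add: vec_eq_iff forall_3 axis_def)

lemma coord_line_deriv:
  "((\<lambda>t. (x + t *\<^sub>R v) $ k) has_real_derivative v $ k) (at 0)"
proof -
  have "((\<lambda>t. x $ k + t * v $ k) has_real_derivative v $ k) (at 0)"
    by (auto intro!: derivative_eq_intros)
  thus ?thesis by simp
qed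



lemma sm_d0: "smooth_on U f \<Longrightarrow> y \<in> U \<Longrightarrow> (\<lambda>t. f (y + t *\<^sub>R axis i 1)) differentiable (at 0)"
  unfolding smooth_on_def by (metis iter_partial.simps(1))

lemma sm_d1: "smooth_on U f \<Longrightarrow> y \<in> U \<Longrightarrow> (\<lambda>t. partial a f (y + t *\<^sub>R axis i 1)) differentiable (at 0)"
  unfolding smooth_on_def by (metis iter_partial.simps)

lemma sm_c2: "smooth_on U f \<Longrightarrow> continuous_on U (partial j (partial i f))"
  unfolding smooth_on_def by (metis iter_partial.simps)

lemma open_U: assumes "open D" shows "open {x. gv x \<in> D}"
proof -
  have lin: "linear gv"
    by (rule linearI) (simp_all add: gv_def vec_eq_iff forall_3)
  have "open (gv -` D)"
    by (rule continuous_open_vimage[OF assms]) (rule linear_continuous_at[OF lin[unfolded linear_conv_bounded_linear]])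
  thus ?thesis by (simp add: vimage_def)
qed

definition qm :: "(real^3 \<Rightarrow> real^3) \<Rightarrow> real^3 \<Rightarrow> 3 \<Rightarrow> 3 \<Rightarrow> real" where
  "qm mu y j k = partial j (\<lambda>z. mu z $ k) y"

lemma mu_line:
  assumes sm: "\<And>k. smooth_on D (\<lambda>y. mu y $ k)" and x: "gv x \<in> D"
  shows "((\<lambda>t. mu (gv (x + t *\<^sub>R axis l 1)) $ k) has_real_derivative ee (qm mu (gv x)) l k) (at 0)"
proof -
  have eq: "(\<lambda>t. mu (gv (x + t *\<^sub>R axis l 1)) $ k) = (\<lambda>t. mu (gv x + t *\<^sub>R gv (axis l 1)) $ k)"
    by (simp add: gv_lin)
  have D: "((\<lambda>t. mu (gv x + t *\<^sub>R axis j 1) $ k) has_real_derivative qm mu (gv x) j k) (at 0)" for j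
    unfolding qm_def using partial_HD[OF sm_d0[OF sm x]] .
  show ?thesis unfolding eq using exhaust_6[of l]
    by (elim disjE) (simp_all add: gv_axis ee_def D)
qed

lemma Wv_line:
  assumes sm: "\<And>k. smooth_on D (\<lambda>y. mu y $ k)" and x: "gv x \<in> D"
  shows "((\<lambda>t. Wv mu (x + t *\<^sub>R axis l 1) $ k) has_real_derivative
     (axis l 1 + vector [ee (qm mu (gv x)) l 1, ee (qm mu (gv x)) l 2, ee (qm mu (gv x)) l 3, 0, 0, 0]) $ k) (at 0)"
proof -
  have C: "((\<lambda>t. x $ j + t * axis l 1 $ j) has_real_derivative axis l 1 $ j) (at 0)" for j
    by (auto intro!: derivative_eq_intros)
  note M = mu_line[OF sm x]
  show ?thesis using exhaust_6[of k]
    by (elim disjE) (simp_all add: Wv_def C DERIV_add[OF C M])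
qed

lemma Pi_line:
  assumes sm: "\<And>k. smooth_on D (\<lambda>y. mu y $ k)" and x: "gv x \<in> D"
  shows "((\<lambda>t. Pi_mu mu (x + t *\<^sub>R axis l 1) $ a $ b) has_real_derivative ddP (qm mu (gv x)) l a b) (at 0)"
  unfolding Pi_Lm ddP_def by (rule Lm_deriv[OF Wv_line[OF sm x]])

lemma pb_sum: "pbracket mu f g y = (\<Sum>a\<in>UNIV. \<Sum>b\<in>UNIV. partial a f y * Pi_mu mu y $ a $ b * partial b g y)"
  unfolding pbracket_def inner_vec_def matrix_vector_mult_def grad_def
  by (simp add: sum_distrib_left mult_ac)

lemma pb_deriv:
  assumes sm: "\<And>k. smooth_on D (\<lambda>y. mu y $ k)" and x: "gv x \<in> D"
  and dg: "\<And>a. (\<lambda>t. partial a g (x + t *\<^sub>R axis l 1)) differentiable (at 0)"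
  and dh: "\<And>a. (\<lambda>t. partial a h (x + t *\<^sub>R axis l 1)) differentiable (at 0)"
  shows "((\<lambda>t. pbracket mu g h (x + t *\<^sub>R axis l 1)) has_real_derivative
     br1 (\<lambda>a b. Pi_mu mu x $ a $ b) (ddP (qm mu (gv x))) (\<lambda>a. partial a g x) (\<lambda>l a. partial l (partial a g) x)
        (\<lambda>a. partial a h x) (\<lambda>l a. partial l (partial a h) x) l) (at 0)"
proof -
  have T: "((\<lambda>t. partial a g (x + t *\<^sub>R axis l 1) * Pi_mu mu (x + t *\<^sub>R axis l 1) $ a $ b * partial b h (x + t *\<^sub>R axis l 1))
     has_real_derivative
       partial l (partial a g) x * Pi_mu mu x $ a $ b * partial b h x
     + partial a g x * ddP (qm mu (gv x)) l a b * partial b h x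
     + partial a g x * Pi_mu mu x $ a $ b * partial l (partial b h) x) (at 0)" for a b
    apply (rule DERIV_cong)
     apply (rule DERIV_mult[OF DERIV_mult[OF partial_HD[OF dg] Pi_line[OF sm x]] partial_HD[OF dh]])
    apply (simp add: algebra_simps)
    done
  show ?thesis unfolding pb_sum br1_def
    by (intro DERIV_sum T)
qed



lemma jacobi_formula:
  assumes oD: "open D" and sm: "\<And>k. smooth_on D (\<lambda>y. mu y $ k)" and x: "gv x \<in> D"
  and sf: "smooth_on {x. gv x \<in> D} f" and sg: "smooth_on {x. gv x \<in> D} g" and sh: "smooth_on {x. gv x \<in> D} h"
  shows "pbracket mu f (pbracket mu g h) x + pbracket mu g (pbracket mu h f) x + pbracket mu h (pbracket mu f g) x
   = (\<Sum>c\<in>UNIV. \<Sum>a\<in>UNIV. \<Sum>b\<in>UNIV. partial c f x * partial a g x * partial b h x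
        * Sx (\<lambda>c l. Lm (Wv mu x) $ c $ l) (ddP (qm mu (gv x))) c a b)"
proof -
  define U where "U = {x. gv x \<in> D}"
  have oU: "open U" unfolding U_def using open_U[OF oD] .
  have xU: "x \<in> U" unfolding U_def using x by simp
  define P where "P = (\<lambda>a b. Pi_mu mu x $ a $ b)"
  define dP where "dP = ddP (qm mu (gv x))"
  define d1 where "d1 u = (\<lambda>a. partial a u x)" for u :: "real^6 \<Rightarrow> real"
  define H where "H u = (\<lambda>l a. partial l (partial a u) x)" for u :: "real^6 \<Rightarrow> real"
  have pd: "partial l (pbracket mu u v) x = br1 P dP (d1 u) (H u) (d1 v) (H v) l"
    if "smooth_on U u" "smooth_on U v" for u v l
    using partial_eqI[OF pb_deriv[OF sm x sm_d1[OF that(1) xU] sm_d1[OF that(2) xU]]]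
    unfolding P_def dP_def d1_def H_def .
  have pbo: "pbracket mu u (pbracket mu v w) x = (\<Sum>c\<in>UNIV. \<Sum>d\<in>UNIV. d1 u c * P c d * br1 P dP (d1 v) (H v) (d1 w) (H w) d)"
    if "smooth_on U v" "smooth_on U w" for u v w
    unfolding pb_sum[of mu u] pd[OF that] P_def d1_def ..
  have Hsym: "\<forall>a b. H u a b = H u b a" if su: "smooth_on U u" for u
  proof (intro allI)
    fix a b
    show "H u a b = H u b a" unfolding H_def
      by (rule schwarz[OF oU xU]) (auto intro: sm_d0[OF su] sm_d1[OF su] sm_c2[OF su])
  qed
  have Pas: "\<forall>a b. P a b = - P b a" unfolding P_def Pi_Lm using Lm_antisym by blast
  have sf': "smooth_on U f" and sg': "smooth_on U g" and sh': "smooth_on U h"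
    using sf sg sh unfolding U_def by auto
  have "pbracket mu f (pbracket mu g h) x + pbracket mu g (pbracket mu h f) x + pbracket mu h (pbracket mu f g) x
     = TT P dP (d1 f) (d1 g) (d1 h) + TT P dP (d1 g) (d1 h) (d1 f) + TT P dP (d1 h) (d1 f) (d1 g)"
    unfolding pbo[OF sg' sh'] pbo[OF sh' sf'] pbo[OF sf' sg']
    by (rule jacobi_alg[OF Pas Hsym[OF sf'] Hsym[OF sg'] Hsym[OF sh']])
  also have "\<dots> = (\<Sum>c\<in>UNIV. \<Sum>a\<in>UNIV. \<Sum>b\<in>UNIV. d1 f c * d1 g a * d1 h b * Sx P dP c a b)"
    by (rule TT_Sx)
  finally show ?thesis unfolding d1_def P_def dP_def Pi_Lm .
qed

lemma coord_partial: "partial i (\<lambda>y::real^'n. y $ k) x = axis i 1 $ k"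
  by (rule partial_eqI) (rule coord_line_deriv)

lemma const_partial: "partial i (\<lambda>y::real^'n. c) x = 0"
  by (rule partial_eqI) simp

lemma coord_iter: "iter_partial is (\<lambda>y::real^'n. y $ k) = (\<lambda>y. y $ k) \<or> (\<exists>c. iter_partial is (\<lambda>y::real^'n. y $ k) = (\<lambda>y. c))"
proof (induction "is")
  case Nil
  then show ?case by simp
next
  case (Cons i "is")
  then show ?case
  proof
    assume "iter_partial is (\<lambda>y::real^'n. y $ k) = (\<lambda>y. y $ k)"
    hence "iter_partial (i # is) (\<lambda>y::real^'n. y $ k) = (\<lambda>y. axis i 1 $ k)"
      by (simp add: coord_partial[abs_def])
    thus ?case by blast
  next
    assume "\<exists>c. iter_partial is (\<lambda>y::real^'n. y $ k) = (\<lambda>y. c)"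
    then obtain c where "iter_partial is (\<lambda>y::real^'n. y $ k) = (\<lambda>y. c)" by blast
    hence "iter_partial (i # is) (\<lambda>y::real^'n. y $ k) = (\<lambda>y. 0)"
      by (simp add: const_partial[abs_def])
    thus ?case by blast
  qed
qed

lemma coord_smooth: "smooth_on U (\<lambda>y::real^'n. y $ k)"
  unfolding smooth_on_def
proof (intro allI conjI ballI)
  fix "is" :: "'n list" and i x
  show "continuous_on U (iter_partial is (\<lambda>y::real^'n. y $ k))"
    using coord_iter[of "is" k] continuous_on_component[OF continuous_on_id, of U k]
    by (auto intro: continuous_on_const)
  show "(\<lambda>t. iter_partial is (\<lambda>y::real^'n. y $ k) (x + t *\<^sub>R axis i 1)) differentiable at 0"
    using coord_iter[of "is" k]
  proof
    assume e: "iter_partial is (\<lambda>y::real^'n. y $ k) = (\<lambda>y. y $ k)"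
    show ?thesis unfolding e by (rule HD_differentiable[OF coord_line_deriv])
  next
    assume "\<exists>c. iter_partial is (\<lambda>y::real^'n. y $ k) = (\<lambda>y. c)"
    then obtain c where e: "iter_partial is (\<lambda>y::real^'n. y $ k) = (\<lambda>y. c)" by blast
    show ?thesis unfolding e by (rule HD_differentiable[OF DERIV_const])
  qed
qed

lemma delta3:
  fixes S :: "'n::finite \<Rightarrow> 'n \<Rightarrow> 'n \<Rightarrow> real"
  shows "(\<Sum>c\<in>UNIV. \<Sum>a\<in>UNIV. \<Sum>b\<in>UNIV. (axis c 1 :: real^'n) $ i * (axis a 1 :: real^'n) $ j * (axis b 1 :: real^'n) $ k * S c a b) = S i j k"
proof -
  have d1: "(\<Sum>c\<in>UNIV. (axis c 1 :: real^'n) $ i * F c) = F i" for i and F :: "'n \<Rightarrow> real"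
  proof -
    have "(\<Sum>c\<in>UNIV. (axis c 1 :: real^'n) $ i * F c) = (\<Sum>c\<in>UNIV. if c = i then F c else 0)"
      by (rule sum.cong) (auto simp: axis_def)
    thus ?thesis by simp
  qed
  have "(\<Sum>c\<in>UNIV. \<Sum>a\<in>UNIV. \<Sum>b\<in>UNIV. (axis c 1 :: real^'n) $ i * (axis a 1 :: real^'n) $ j * (axis b 1 :: real^'n) $ k * S c a b)
     = (\<Sum>c\<in>UNIV. (axis c 1 :: real^'n) $ i * (\<Sum>a\<in>UNIV. (axis a 1 :: real^'n) $ j * (\<Sum>b\<in>UNIV. (axis b 1 :: real^'n) $ k * S c a b)))"
    by (simp add: sum_distrib_left mult.assoc)
  thus ?thesis by (simp only: d1)
qed



lemma K_eq:
  "gv x \<bullet> curl3 mu (gv x) =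
   Wv mu x $ 4 * (qm mu (gv x) 2 3 - qm mu (gv x) 3 2) + Wv mu x $ 5 * (qm mu (gv x) 3 1 - qm mu (gv x) 1 3)
   + Wv mu x $ 6 * (qm mu (gv x) 1 2 - qm mu (gv x) 2 1)"
  unfolding inner_vec_def sum_3 curl3_def qm_def Wv_def by (simp add: gv_def)

lemma div_cross:
  assumes sm: "\<And>k. smooth_on D (\<lambda>y. mu y $ k)" and y: "y \<in> D"
  shows "div3 (\<lambda>z. cross3 z (mu z)) y = - (y \<bullet> curl3 mu y)"
proof -
  have M: "((\<lambda>t. mu (y + t *\<^sub>R axis i 1) $ k) has_real_derivative qm mu y i k) (at 0)" for i k
    unfolding qm_def using partial_HD[OF sm_d0[OF sm y]] .
  have C: "((\<lambda>t. (y + t *\<^sub>R axis i 1) $ j) has_real_derivative axis i 1 $ j) (at 0)" for i j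
    by (rule coord_line_deriv)
  have X: "partial i (\<lambda>z. z$j * mu z $ k - z$p * mu z $ r) y
     = axis i 1 $ j * mu y $ k + y $ j * qm mu y i k - (axis i 1 $ p * mu y $ r + y $ p * qm mu y i r)" for i j k p r
    apply (rule partial_eqI)
    apply (rule DERIV_cong)
     apply (rule DERIV_diff[OF DERIV_mult[OF C M] DERIV_mult[OF C M]])
    apply simp
    done
  have e1: "(\<lambda>z. cross3 z (mu z) $ 1) = (\<lambda>z. z$2 * mu z $ 3 - z$3 * mu z $ 2)"
   and e2: "(\<lambda>z. cross3 z (mu z) $ 2) = (\<lambda>z. z$3 * mu z $ 1 - z$1 * mu z $ 3)"
   and e3: "(\<lambda>z. cross3 z (mu z) $ 3) = (\<lambda>z. z$1 * mu z $ 2 - z$2 * mu z $ 1)"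
    by (simp_all add: cross3_def)
  show ?thesis
    unfolding div3_def sum_3 e1 e2 e3 X
    by (simp add: axis_def inner_vec_def sum_3 curl3_def qm_def algebra_simps)
qed

theorem mainTheorem5:
  fixes D :: "(real^3) set" and mu :: "real^3 \<Rightarrow> real^3"
  assumes "open D" and "0 \<notin> D"
    and "\<And>k. smooth_on D (\<lambda>y. mu y $ k)"
  shows "(defines_poisson mu D \<longleftrightarrow> (\<forall>y\<in>D. y \<bullet> curl3 mu y = 0))
       \<and> ((\<forall>y\<in>D. y \<bullet> curl3 mu y = 0) \<longleftrightarrow> (\<forall>y\<in>D. div3 (\<lambda>z. cross3 z (mu z)) y = 0))"
proof (intro conjI iffI)
  note oD = assms(1) and sm = assms(3)
  show "\<forall>y\<in>D. y \<bullet> curl3 mu y = 0" if dp: "defines_poisson mu D"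
  proof
    fix y assume y: "y \<in> D"
    define x0 :: "real^6" where "x0 = vector [0, 0, 0, y$1, y$2, y$3]"
    have gx: "gv x0 = y" unfolding x0_def gv_def by (simp add: vec_eq_iff forall_3)
    have x: "gv x0 \<in> D" using gx y by simp
    have J: "pbracket mu (\<lambda>x. x$1) (pbracket mu (\<lambda>x. x$2) (\<lambda>x. x$3)) x0
       + pbracket mu (\<lambda>x. x$2) (pbracket mu (\<lambda>x. x$3) (\<lambda>x. x$1)) x0
       + pbracket mu (\<lambda>x. x$3) (pbracket mu (\<lambda>x. x$1) (\<lambda>x. x$2)) x0 = 0"
      using dp x unfolding defines_poisson_def using coord_smooth by blast
    have "Sx (\<lambda>c l. Lm (Wv mu x0) $ c $ l) (ddP (qm mu (gv x0))) 1 2 3 = 0"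
      using J unfolding jacobi_formula[OF oD sm x coord_smooth coord_smooth coord_smooth] coord_partial delta3 .
    hence "gv x0 \<bullet> curl3 mu (gv x0) = 0" unfolding S123 K_eq by simp
    thus "y \<bullet> curl3 mu y = 0" using gx by simp
  qed
  show "defines_poisson mu D" if K: "\<forall>y\<in>D. y \<bullet> curl3 mu y = 0"
    unfolding defines_poisson_def
  proof (intro allI impI)
    fix f g h x
    assume s: "smooth_on {x. gv x \<in> D} f \<and> smooth_on {x. gv x \<in> D} g \<and> smooth_on {x. gv x \<in> D} h"
      and x: "gv x \<in> D"
    have K0: "Wv mu x $ 4 * (qm mu (gv x) 2 3 - qm mu (gv x) 3 2) + Wv mu x $ 5 * (qm mu (gv x) 3 1 - qm mu (gv x) 1 3)
   + Wv mu x $ 6 * (qm mu (gv x) 1 2 - qm mu (gv x) 2 1) = 0"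
      using K x K_eq[of x mu] by simp
    show "pbracket mu f (pbracket mu g h) x + pbracket mu g (pbracket mu h f) x + pbracket mu h (pbracket mu f g) x = 0"
      unfolding jacobi_formula[OF oD sm x conjunct1[OF s] conjunct1[OF conjunct2[OF s]] conjunct2[OF conjunct2[OF s]]]
      unfolding S_zero[OF K0] by simp
  qed
  show "\<forall>y\<in>D. div3 (\<lambda>z. cross3 z (mu z)) y = 0" if "\<forall>y\<in>D. y \<bullet> curl3 mu y = 0"
    using that div_cross[OF sm] by simp
  show "\<forall>y\<in>D. y \<bullet> curl3 mu y = 0" if "\<forall>y\<in>D. div3 (\<lambda>z. cross3 z (mu z)) y = 0"
    using that div_cross[OF sm] by simp
qed


end
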